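(* Let $Q\ge1$, $D\ge1$, $L$ an even positive integer, and for $q=1,\dots,Q$ let $\alpha_q\ge0$, $\boldsymbol\mu_{q1},\boldsymbol\mu_{q2}\in\mathbb{R}^D$, $\boldsymbol\sigma_{q1}^2,\boldsymbol\sigma_{q2}^2\in\mathbb{R}^D$ with positive entries, and $\rho_q\in[-1,1]$. Let $s_q$ and $k_{\mathrm{ngsm}}$ be as in the context. Let the random vectors $[\mathbf{w}_{q1}^{(l)};\mathbf{w}_{q2}^{(l)}]\in\mathbb{R}^{2D}$, $q=1,\dots,Q$, $l=1,\dots,L/2$, be independent with $[\mathbf{w}_{q1}^{(l)};\mathbf{w}_{q2}^{(l)}]\sim s_q$, and write $p(\mathbf{W})=\prod_{q=1}^Q\prod_{l=1}^{L/2}s_q(\mathbf{w}_{q1}^{(l)},\mathbf{w}_{q2}^{(l)})$ for their joint law. For each $q$ define $\varphi_q:\mathbb{R}^D\to\mathbb{R}^L$ by \[ \varphi_q(\mathbf{x})=\sqrt{\alpha_q}\sqrt{\tfrac{1}{2L}}\begin{bmatrix}\big(\cos(\mathbf{w}_{q1}^{(l)\top}\mathbf{x})+\cos(\mathbf{w}_{q2}^{(l)\top}\mathbf{x})\big)_{l=1}^{L/2}\\ \big(\sin(\mathbf{w}_{q1}^{(l)\top}\mathbf{x})+\sin(\mathbf{w}_{q2}^{(l)\top}\mathbf{x})\big)_{l=1}^{L/2}\end{bmatrix}, \] and let $\varphi(\mathbf{x})=[\varphi_1(\mathbf{x})^\top,\dots,\varphi_Q(\mathbf{x})^\top]^\top\in\mathbb{R}^{QL}$.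 Then for all $\mathbf{x}_1,\mathbf{x}_2\in\mathbb{R}^D$, \[ \mathbb{E}_{p(\mathbf{W})}\big[\varphi(\mathbf{x}_1)^\top\varphi(\mathbf{x}_2)\big]=k_{\mathrm{ngsm}}(\mathbf{x}_1,\mathbf{x}_2). \]
   Context: For each $q$, set $\boldsymbol\Sigma_1=\operatorname{diag}(\boldsymbol\sigma_{q1}^2)$, $\boldsymbol\Sigma_2=\operatorname{diag}(\boldsymbol\sigma_{q2}^2)$, $\boldsymbol\Sigma_c=\rho_q\operatorname{diag}(\boldsymbol\sigma_{q1})\operatorname{diag}(\boldsymbol\sigma_{q2})$ (index $q$ suppressed), and let $\mathcal{N}_q$ denote the Gaussian density on $\mathbb{R}^{2D}$ with mean $(\boldsymbol\mu_{q1},\boldsymbol\mu_{q2})$ and covariance $\begin{bmatrix}\boldsymbol\Sigma_1&\boldsymbol\Sigma_c^\top\\ \boldsymbol\Sigma_c&\boldsymbol\Sigma_2\end{bmatrix}$. Define the probability density $s_q(\mathbf{w}_1,\mathbf{w}_2)=\tfrac12\mathcal{N}_q(\mathbf{w}_1,\mathbf{w}_2)+\tfrac12\mathcal{N}_q(-\mathbf{w}_1,-\mathbf{w}_2)$. The NG-SM kernel is \[ \begin{aligned} k_{\mathrm{ngsm}}(\mathbf{x}_1,\mathbf{x}_2)=\frac14\sum_{q=1}^Q\alpha_q\Big[&\exp\!\big(-\tfrac12(\mathbf{x}_1^\top\boldsymbol\Sigma_1\mathbf{x}_1-2\mathbf{x}_1^\top\boldsymbol\Sigma_c\mathbf{x}_2+\mathbf{x}_2^\top\boldsymbol\Sigma_2\mathbf{x}_2)\big)\cos(\boldsymbol\mu_{q1}^\top\mathbf{x}_1-\boldsymbol\mu_{q2}^\top\mathbf{x}_2)\\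 &+\exp\!\big(-\tfrac12(\mathbf{x}_2^\top\boldsymbol\Sigma_1\mathbf{x}_2-2\mathbf{x}_1^\top\boldsymbol\Sigma_c\mathbf{x}_2+\mathbf{x}_1^\top\boldsymbol\Sigma_2\mathbf{x}_1)\big)\cos(\boldsymbol\mu_{q1}^\top\mathbf{x}_2-\boldsymbol\mu_{q2}^\top\mathbf{x}_1)\\ &+\exp\!\big(-\tfrac12(\mathbf{x}_1-\mathbf{x}_2)^\top\boldsymbol\Sigma_1(\mathbf{x}_1-\mathbf{x}_2)\big)\cos(\boldsymbol\mu_{q1}^\top(\mathbf{x}_1-\mathbf{x}_2))\\ &+\exp\!\big(-\tfrac12(\mathbf{x}_1-\mathbf{x}_2)^\top\boldsymbol\Sigma_2(\mathbf{x}_1-\mathbf{x}_2)\big)\cos(\boldsymbol\mu_{q2}^\top(\mathbf{x}_1-\mathbf{x}_2))\Big]. \end{aligned} \] *)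

theory Defs
  imports "HOL-Probability.Probability"
begin

text \<open>Index conventions: components q = 0..Q-1, samples l = 0..L/2-1 (shifted by one
  from the paper). Parameters are given as functions of q; the variance vectors
  v1 q, v2 q play the role of sigma_q1^2, sigma_q2^2, and sigma_qi = entrywise sqrt.\<close>

definition sdev :: "real ^ 'd \<Rightarrow> real ^ 'd" where
  "sdev v = (\<chi> i. sqrt (v $ i))"

definition std_gauss2 :: "((real ^ 'd) \<times> (real ^ 'd)) measure" where
  "std_gauss2 = density lborel
     (\<lambda>(z1, z2). ennreal ((\<Prod>i\<in>UNIV. std_normal_density (z1 $ i)) *
                            (\<Prod>i\<in>UNIV. std_normal_density (z2 $ i))))"

text \<open>The Gaussian N_q on R^{2D} with mean (mu1, mu2) and covariance
  [[diag v1, Sigma_c^T],[Sigma_c, diag v2]], Sigma_c = rho diag(sqrt v1) diag(sqrt v2),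
  realised as the law of an affine image mean + A z of a standard normal z with
  A A^T equal to the covariance (valid also in the degenerate case |rho| = 1).\<close>
definition ngsm_gauss ::
  "real ^ 'd \<Rightarrow> real ^ 'd \<Rightarrow> real ^ 'd \<Rightarrow> real ^ 'd \<Rightarrow> real \<Rightarrow> ((real ^ 'd) \<times> (real ^ 'd)) measure" where
  "ngsm_gauss mu1 mu2 v1 v2 rho = distr std_gauss2 borel
     (\<lambda>(z1, z2). ( (\<chi> i. mu1 $ i + sdev v1 $ i * z1 $ i),
                   (\<chi> i. mu2 $ i + sdev v2 $ i * (rho * z1 $ i + sqrt (1 - rho\<^sup>2) * z2 $ i))))"

text \<open>The mixture s_q = 1/2 N_q(w) + 1/2 N_q(-w): law of eps * w with w ~ N_q and
  eps a fair random sign independent of w.\<close>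
definition ngsm_s ::
  "real ^ 'd \<Rightarrow> real ^ 'd \<Rightarrow> real ^ 'd \<Rightarrow> real ^ 'd \<Rightarrow> real \<Rightarrow> ((real ^ 'd) \<times> (real ^ 'd)) measure" where
  "ngsm_s mu1 mu2 v1 v2 rho =
     distr (measure_pmf (bernoulli_pmf (1/2)) \<Otimes>\<^sub>M ngsm_gauss mu1 mu2 v1 v2 rho) borel
       (\<lambda>(b, w). if b then w else - w)"

definition ngsm_joint ::
  "nat \<Rightarrow> nat \<Rightarrow> (nat \<Rightarrow> real ^ 'd) \<Rightarrow> (nat \<Rightarrow> real ^ 'd) \<Rightarrow> (nat \<Rightarrow> real ^ 'd) \<Rightarrow>
   (nat \<Rightarrow> real ^ 'd) \<Rightarrow> (nat \<Rightarrow> real) \<Rightarrow> (nat \<times> nat \<Rightarrow> (real ^ 'd) \<times> (real ^ 'd)) measure" where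
  "ngsm_joint Q L mu1 mu2 v1 v2 rho =
     PiM ({..<Q} \<times> {..<L div 2}) (\<lambda>(q, l). ngsm_s (mu1 q) (mu2 q) (v1 q) (v2 q) (rho q))"

definition ngsm_feat ::
  "nat \<Rightarrow> (nat \<Rightarrow> real) \<Rightarrow> (nat \<times> nat \<Rightarrow> (real ^ 'd) \<times> (real ^ 'd)) \<Rightarrow> nat \<Rightarrow> real ^ 'd \<Rightarrow> nat \<Rightarrow> real" where
  "ngsm_feat L alpha W q x j =
     sqrt (alpha q) * sqrt (1 / (2 * real L)) *
     (if j < L div 2
      then cos (fst (W (q, j)) \<bullet> x) + cos (snd (W (q, j)) \<bullet> x)
      else sin (fst (W (q, j - L div 2)) \<bullet> x) + sin (snd (W (q, j - L div 2)) \<bullet> x))"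

definition ngsm_inner ::
  "nat \<Rightarrow> nat \<Rightarrow> (nat \<Rightarrow> real) \<Rightarrow> (nat \<times> nat \<Rightarrow> (real ^ 'd) \<times> (real ^ 'd)) \<Rightarrow> real ^ 'd \<Rightarrow> real ^ 'd \<Rightarrow> real" where
  "ngsm_inner Q L alpha W x1 x2 =
     (\<Sum>q<Q. \<Sum>j<L. ngsm_feat L alpha W q x1 j * ngsm_feat L alpha W q x2 j)"

definition diag_form :: "real ^ 'd \<Rightarrow> real ^ 'd \<Rightarrow> real ^ 'd \<Rightarrow> real" where
  "diag_form v x y = (\<Sum>i\<in>UNIV. v $ i * x $ i * y $ i)"

definition k_ngsm ::
  "nat \<Rightarrow> (nat \<Rightarrow> real) \<Rightarrow> (nat \<Rightarrow> real ^ 'd) \<Rightarrow> (nat \<Rightarrow> real ^ 'd) \<Rightarrow> (nat \<Rightarrow> real ^ 'd) \<Rightarrow>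
   (nat \<Rightarrow> real ^ 'd) \<Rightarrow> (nat \<Rightarrow> real) \<Rightarrow> real ^ 'd \<Rightarrow> real ^ 'd \<Rightarrow> real" where
  "k_ngsm Q alpha mu1 mu2 v1 v2 rho x1 x2 = (1/4) * (\<Sum>q<Q. alpha q * (
     let S1 = v1 q; S2 = v2 q; Sc = (\<chi> i. rho q * (sdev (v1 q) $ i * sdev (v2 q) $ i)) in
       exp (- (1/2) * (diag_form S1 x1 x1 - 2 * diag_form Sc x1 x2 + diag_form S2 x2 x2))
         * cos (mu1 q \<bullet> x1 - mu2 q \<bullet> x2)
     + exp (- (1/2) * (diag_form S1 x2 x2 - 2 * diag_form Sc x1 x2 + diag_form S2 x1 x1))
         * cos (mu1 q \<bullet> x2 - mu2 q \<bullet> x1)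
     + exp (- (1/2) * diag_form S1 (x1 - x2) (x1 - x2)) * cos (mu1 q \<bullet> (x1 - x2))
     + exp (- (1/2) * diag_form S2 (x1 - x2) (x1 - x2)) * cos (mu2 q \<bullet> (x1 - x2))))"

end

theory Submission
  imports Defs
begin

definition gaussE :: "'a::euclidean_space measure" where
  "gaussE = density lborel (\<lambda>z. ennreal (\<Prod>b\<in>Basis. std_normal_density (z \<bullet> b)))"

lemma nn_std_normal: "(\<integral>\<^sup>+x. ennreal (std_normal_density x) \<partial>lborel) = 1"
proof -
  interpret prob_space "density lborel (std_normal_density)" by (rule prob_space_normal_density) simp
  have "emeasure (density lborel (std_normal_density)) UNIV = 1" using emeasure_space_1 by simp
  then show ?thesis by (simp add: emeasure_density)
qed

lemma prob_space_gaussE: "prob_space (gaussE :: 'a::euclidean_space measure)"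
proof
  have "emeasure (gaussE::'a measure) (space gaussE) = (\<integral>\<^sup>+z. ennreal (\<Prod>b\<in>Basis. std_normal_density (z \<bullet> b)) \<partial>(lborel::'a measure))"
    by (simp add: gaussE_def emeasure_density)
  also have "\<dots> = (\<integral>\<^sup>+z. (\<Prod>b\<in>(Basis::'a set). ennreal (std_normal_density (z \<bullet> b))) \<partial>lborel)"
    by (intro nn_integral_cong) (simp add: prod_ennreal normal_density_nonneg)
  also have "\<dots> = (\<Prod>b\<in>(Basis::'a set). (\<integral>\<^sup>+x. ennreal (std_normal_density x) \<partial>lborel))"
    by (rule nn_integral_lborel_prod) auto
  also have "\<dots> = 1" by (simp add: nn_std_normal)
  finally show "emeasure (gaussE::'a measure) (space gaussE) = 1" .
qed

lemma char_gaussE: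
  fixes a :: "'a::euclidean_space"
  shows "(\<integral>z. iexp (a \<bullet> z) \<partial>(gaussE::'a measure)) = complex_of_real (exp (- (a \<bullet> a) / 2))"
proof -
  interpret product_sigma_finite "\<lambda>_. lborel :: real measure" by standard
  let ?S = "\<lambda>f::'a \<Rightarrow> real. \<Sum>b\<in>Basis. f b *\<^sub>R b"
  have Sb: "?S f \<bullet> b = f b" if "b \<in> Basis" for f b
    using that by (simp add: inner_sum_left inner_Basis if_distrib cong: if_cong)
  have "(\<integral>z. iexp (a \<bullet> z) \<partial>(gaussE::'a measure)) =
     (\<integral>z. (\<Prod>b\<in>Basis. std_normal_density (z \<bullet> b)) *\<^sub>R iexp (a \<bullet> z) \<partial>(lborel::'a measure))"
    unfolding gaussE_def
    by (subst integral_density) (auto simp: normal_density_nonneg prod_nonneg)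
  also have "\<dots> = (\<integral>f. (\<Prod>b\<in>Basis. std_normal_density (?S f \<bullet> b)) *\<^sub>R iexp (a \<bullet> ?S f) \<partial>(\<Pi>\<^sub>M b\<in>(Basis::'a set). lborel))"
    by (subst lborel_eq) (subst integral_distr, auto)
  also have "\<dots> = (\<integral>f. (\<Prod>b\<in>(Basis::'a set). complex_of_real (std_normal_density (f b)) * iexp ((a \<bullet> b) * f b)) \<partial>(\<Pi>\<^sub>M b\<in>(Basis::'a set). lborel))"
  proof (intro Bochner_Integration.integral_cong refl)
    fix f :: "'a \<Rightarrow> real"
    have "a \<bullet> ?S f = (\<Sum>b\<in>Basis. (a \<bullet> b) * f b)"
      by (simp add: inner_sum_right mult.commute)
    then have "iexp (a \<bullet> ?S f) = (\<Prod>b\<in>(Basis::'a set). iexp ((a \<bullet> b) * f b))"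
      by (simp add: distrib_left sum_distrib_left exp_sum)
    then show "(\<Prod>b\<in>Basis. std_normal_density (?S f \<bullet> b)) *\<^sub>R iexp (a \<bullet> ?S f) =
      (\<Prod>b\<in>(Basis::'a set). complex_of_real (std_normal_density (f b)) * iexp ((a \<bullet> b) * f b))"
      by (simp add: Sb scaleR_conv_of_real prod.distrib)
  qed
  also have "\<dots> = (\<Prod>b\<in>(Basis::'a set). (\<integral>x. complex_of_real (std_normal_density x) * iexp ((a \<bullet> b) * x) \<partial>lborel))"
  proof (rule product_integral_prod[where f="\<lambda>b x. complex_of_real (std_normal_density x) * iexp ((a \<bullet> b) * x)"])
    fix b :: 'a
    interpret prob_space "density lborel (std_normal_density)" by (rule prob_space_normal_density) simp
    have "integrable (density lborel (std_normal_density)) (\<lambda>x. iexp ((a \<bullet> b) * x))"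
      by (rule integrable_iexp) auto
    then show "integrable lborel (\<lambda>x. complex_of_real (std_normal_density x) * iexp ((a \<bullet> b) * x))"
      by (subst (asm) integrable_density) (auto simp: normal_density_nonneg scaleR_conv_of_real)
  qed simp
  also have "\<dots> = (\<Prod>b\<in>(Basis::'a set). complex_of_real (exp (- ((a \<bullet> b)^2) / 2)))"
  proof (rule prod.cong[OF refl])
    fix b :: 'a
    have "char std_normal_distribution (a \<bullet> b) = (\<integral>x. complex_of_real (std_normal_density x) * iexp ((a \<bullet> b) * x) \<partial>lborel)"
      unfolding char_def
      by (subst integral_density) (auto simp: normal_density_nonneg scaleR_conv_of_real)
    then show "(\<integral>x. complex_of_real (std_normal_density x) * iexp ((a \<bullet> b) * x) \<partial>lborel) = complex_of_real (exp (- ((a \<bullet> b)^2) / 2))"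
      by (simp add: char_std_normal_distribution)
  qed
  also have "\<dots> = complex_of_real (exp (- (a \<bullet> a) / 2))"
    by (simp add: exp_sum[symmetric] sum_divide_distrib[symmetric] sum_negf euclidean_inner[of a a] power2_eq_square del: of_real_prod add: of_real_prod[symmetric])
  finally show ?thesis .
qed

lemma prod_Basis_vec: "(\<Prod>b\<in>(Basis::(real^'d) set). f (z \<bullet> b)) = (\<Prod>i\<in>UNIV. f (z $ i))"
proof -
  have B: "(Basis::(real^'d) set) = range (\<lambda>i. axis i 1)" by (auto simp: Basis_vec_def)
  have "inj (\<lambda>i::'d. axis i (1::real))" by (auto simp: inj_def axis_eq_axis)
  then show ?thesis by (simp add: B prod.reindex inner_axis)
qed

lemma prod_Basis_pair:
  fixes z :: "'a::euclidean_space \<times> 'b::euclidean_space"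
  shows "(\<Prod>b\<in>Basis. f (z \<bullet> b)) = (\<Prod>b\<in>Basis. f (fst z \<bullet> b)) * (\<Prod>b\<in>Basis. f (snd z \<bullet> b))"
  unfolding Basis_prod_def
  by (subst prod.union_disjoint) (auto simp: prod.reindex inj_on_def inner_Pair_0)

lemma std_gauss2_eq: "(std_gauss2 :: ((real^'d) \<times> (real^'d)) measure) = gaussE"
  unfolding std_gauss2_def gaussE_def
  by (intro arg_cong[where f="density lborel"] ext) (simp add: prod_Basis_pair prod_Basis_vec split_beta)

lemma cos_gaussE:
  fixes a :: "'a::euclidean_space"
  shows "(\<integral>z. cos (c + a \<bullet> z) \<partial>(gaussE::'a measure)) = cos c * exp (- (a \<bullet> a) / 2)"
proof -
  interpret prob_space "gaussE::'a measure" by (rule prob_space_gaussE)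
  have sg: "sets (gaussE::'a measure) = sets borel" by (simp add: gaussE_def)
  have int: "integrable (gaussE::'a measure) (\<lambda>z. iexp c * iexp (a \<bullet> z))"
    by (intro integrable_mult_right integrable_iexp) (auto simp: measurable_cong_sets[OF sg refl])
  have "(\<integral>z. cos (c + a \<bullet> z) \<partial>(gaussE::'a measure)) = (\<integral>z. Re (iexp c * iexp (a \<bullet> z)) \<partial>gaussE)"
    by (intro Bochner_Integration.integral_cong refl)
       (simp add: exp_add[symmetric] cis_conv_exp[symmetric] distrib_left cos_add del: exp_add)
  also have "\<dots> = Re (\<integral>z. iexp c * iexp (a \<bullet> z) \<partial>gaussE)"
    by (rule integral_Re[OF int])
  also have "\<dots> = Re (iexp c * complex_of_real (exp (- (a \<bullet> a) / 2)))"
    by (simp add: char_gaussE)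
  also have "\<dots> = cos c * exp (- (a \<bullet> a) / 2)"
    by (simp add: cis_conv_exp[symmetric])
  finally show ?thesis .
qed

lemma alg_aux:
  fixes s1 s2 v1 v2 r \<rho> y1 y2 :: real
  assumes "s1 * s1 = v1" "s2 * s2 = v2" "r * r = 1-\<rho>\<^sup>2"
  shows "(s1 * y1 - \<rho> * s2 * y2) * (s1 * y1 - \<rho> * s2 * y2) + r * s2 * y2 * (r * s2 * y2) = v1 * y1 * y1 - 2 * (\<rho> * (s1 * s2) * y1 * y2) + v2 * y2 * y2"
proof -
  have "(s1 * y1 - \<rho> * s2 * y2) * (s1 * y1 - \<rho> * s2 * y2) + r * s2 * y2 * (r * s2 * y2) = (s1 * s1) * y1 * y1 - 2 * (\<rho> * (s1 * s2) * y1 * y2) + (\<rho>\<^sup>2 + r * r) * (s2 * s2) * y2 * y2"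
    by (simp add: algebra_simps power2_eq_square)
  then show ?thesis using assms by simp
qed

lemma gauss_cos:
  fixes m1 m2 v1 v2 y1 y2 :: "real^'d" and \<rho> :: real
  assumes v1: "\<And>i. v1 $ i > 0" and v2: "\<And>i. v2 $ i > 0" and r: "\<rho> \<in> {-1..1}"
  shows "(\<integral>w. cos (fst w \<bullet> y1 - snd w \<bullet> y2) \<partial>ngsm_gauss m1 m2 v1 v2 \<rho>) =
    exp (- (1/2) * (diag_form v1 y1 y1 - 2 * diag_form (\<chi> i. \<rho> * (sdev v1 $ i * sdev v2 $ i)) y1 y2
       + diag_form v2 y2 y2)) * cos (m1 \<bullet> y1 - m2 \<bullet> y2)"
proof -
  define s1 where "s1 = sdev v1"
  define s2 where "s2 = sdev v2"
  define r where "r = sqrt (1 - \<rho>\<^sup>2)"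
  define T where "T = (\<lambda>z::(real^'d)\<times>(real^'d). ((\<chi> i. m1 $ i + s1 $ i * fst z $ i),
      (\<chi> i. m2 $ i + s2 $ i * (\<rho> * fst z $ i + r * snd z $ i))))"
  define a1 where "a1 = (\<chi> i. s1 $ i * y1 $ i - \<rho> * s2 $ i * y2 $ i)"
  define a2 where "a2 = (\<chi> i. - (r * s2 $ i * y2 $ i))"
  define c where "c = m1 \<bullet> y1 - m2 \<bullet> y2"
  have gT: "ngsm_gauss m1 m2 v1 v2 \<rho> = distr std_gauss2 borel T"
    unfolding ngsm_gauss_def T_def s1_def s2_def r_def by (simp add: case_prod_beta')
  have cT: "continuous_on UNIV T" unfolding T_def by (intro continuous_intros)
  have sg: "sets (std_gauss2 :: ((real^'d)\<times>(real^'d)) measure) = sets borel" by (simp add: std_gauss2_def)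
  have mT: "T \<in> measurable std_gauss2 borel"
    using borel_measurable_continuous_onI[OF cT] by (simp add: measurable_cong_sets[OF sg refl])
  have s1sq: "s1 $ i * s1 $ i = v1 $ i" for i using v1[of i] by (simp add: s1_def sdev_def less_imp_le)
  have s2sq: "s2 $ i * s2 $ i = v2 $ i" for i using v2[of i] by (simp add: s2_def sdev_def less_imp_le)
  have rsq: "r * r = 1 - \<rho>\<^sup>2"
  proof -
    have "\<bar>\<rho>\<bar> \<le> 1" using r by auto
    then have "\<rho>\<^sup>2 \<le> 1" by (simp add: abs_square_le_1)
    then show ?thesis by (simp add: r_def)
  qed
  have arg: "fst (T z) \<bullet> y1 - snd (T z) \<bullet> y2 = c + (a1, a2) \<bullet> z" for z
  proof -
    have "fst (T z) \<bullet> y1 - snd (T z) \<bullet> y2 = (\<Sum>i\<in>UNIV. (m1 $ i + s1 $ i * fst z $ i) * y1 $ i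
        - (m2 $ i + s2 $ i * (\<rho> * fst z $ i + r * snd z $ i)) * y2 $ i)"
      by (simp add: T_def inner_vec_def sum_subtractf)
    also have "\<dots> = (\<Sum>i\<in>UNIV. m1 $ i * y1 $ i - m2 $ i * y2 $ i + a1 $ i * fst z $ i + a2 $ i * snd z $ i)"
      by (intro sum.cong refl) (simp add: a1_def a2_def algebra_simps)
    also have "\<dots> = c + (a1, a2) \<bullet> z"
      by (cases z) (simp add: c_def inner_vec_def sum.distrib sum_subtractf)
    finally show ?thesis .
  qed
  have aa: "(a1, a2) \<bullet> (a1, a2) = diag_form v1 y1 y1 - 2 * diag_form (\<chi> i. \<rho> * (sdev v1 $ i * sdev v2 $ i)) y1 y2
       + diag_form v2 y2 y2"
  proof -
    have "(a1, a2) \<bullet> (a1, a2) = (\<Sum>i\<in>UNIV. a1 $ i * a1 $ i + a2 $ i * a2 $ i)"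
      by (simp add: inner_vec_def sum.distrib)
    also have "\<dots> = (\<Sum>i\<in>UNIV. v1 $ i * y1 $ i * y1 $ i - 2 * ((\<rho> * (s1 $ i * s2 $ i)) * y1 $ i * y2 $ i) + v2 $ i * y2 $ i * y2 $ i)"
    proof (intro sum.cong refl)
      fix i
      show "a1 $ i * a1 $ i + a2 $ i * a2 $ i = v1 $ i * y1 $ i * y1 $ i - 2 * ((\<rho> * (s1 $ i * s2 $ i)) * y1 $ i * y2 $ i) + v2 $ i * y2 $ i * y2 $ i"
        unfolding a1_def a2_def using alg_aux[OF s1sq[of i] s2sq[of i] rsq] by simp
    qed
    also have "\<dots> = diag_form v1 y1 y1 - 2 * diag_form (\<chi> i. \<rho> * (sdev v1 $ i * sdev v2 $ i)) y1 y2
       + diag_form v2 y2 y2"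
      by (simp add: diag_form_def s1_def s2_def sum.distrib sum_subtractf sum_distrib_left)
    finally show ?thesis .
  qed
  have "(\<integral>w. cos (fst w \<bullet> y1 - snd w \<bullet> y2) \<partial>ngsm_gauss m1 m2 v1 v2 \<rho>)
      = (\<integral>z. cos (fst (T z) \<bullet> y1 - snd (T z) \<bullet> y2) \<partial>std_gauss2)"
    unfolding gT by (rule integral_distr[OF mT]) (intro borel_measurable_continuous_onI continuous_intros)
  also have "\<dots> = (\<integral>z. cos (c + (a1, a2) \<bullet> z) \<partial>gaussE)"
    by (simp add: arg std_gauss2_eq)
  also have "\<dots> = cos c * exp (- ((a1, a2) \<bullet> (a1, a2)) / 2)"
    by (rule cos_gaussE)
  moreover have "\<And>E C::real. exp (- (1/2) * E) * cos C = cos C * exp (- E / 2)" by (simp add: mult.commute)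
  ultimately show ?thesis by (simp only: aa c_def)
qed

lemma distr_pair_snd':
  assumes "prob_space M" "prob_space N"
  shows "distr (M \<Otimes>\<^sub>M N) N snd = N"
proof (intro measure_eqI)
  interpret M: prob_space M by fact
  interpret N: prob_space N by fact
  fix A assume A: "A \<in> sets (distr (M \<Otimes>\<^sub>M N) N snd)"
  from A have "emeasure (distr (M \<Otimes>\<^sub>M N) N snd) A = emeasure (M \<Otimes>\<^sub>M N) (space M \<times> A)"
    by (auto simp add: emeasure_distr space_pair_measure dest: sets.sets_into_space intro!: arg_cong2[where f=emeasure])
  with A show "emeasure (distr (M \<Otimes>\<^sub>M N) N snd) A = emeasure N A"
    by (simp add: N.emeasure_pair_measure_Times M.emeasure_space_1)
qed simp

lemma sets_std_gauss2: "sets (std_gauss2 :: ((real^'d)\<times>(real^'d)) measure) = sets borel"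
  by (simp add: std_gauss2_def)

lemma sets_ngsm_gauss: "sets (ngsm_gauss m1 m2 v1 v2 \<rho>) = sets borel"
  by (simp add: ngsm_gauss_def)

lemma prob_space_ngsm_gauss: "prob_space (ngsm_gauss m1 m2 v1 v2 \<rho> :: ((real^'d)\<times>(real^'d)) measure)"
proof -
  interpret prob_space "std_gauss2 :: ((real^'d)\<times>(real^'d)) measure"
    unfolding std_gauss2_eq by (rule prob_space_gaussE)
  have c: "continuous_on UNIV (\<lambda>z::(real^'d)\<times>(real^'d). ((\<chi> i. m1 $ i + sdev v1 $ i * fst z $ i),
      (\<chi> i. m2 $ i + sdev v2 $ i * (\<rho> * fst z $ i + sqrt (1 - \<rho>\<^sup>2) * snd z $ i))))"
    by (intro continuous_intros)
  show ?thesis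
    unfolding ngsm_gauss_def case_prod_beta'
    by (rule prob_space_distr)
       (simp add: measurable_cong_sets[OF sets_std_gauss2 refl] borel_measurable_continuous_onI[OF c])
qed

lemma meas_sign: "(\<lambda>(b, w). if b then w else - w) \<in> measurable (measure_pmf (bernoulli_pmf (1/2)) \<Otimes>\<^sub>M ngsm_gauss m1 m2 v1 v2 \<rho>) (borel :: ((real^'d)\<times>(real^'d)) measure)"
proof -
  have [measurable]: "snd \<in> measurable (measure_pmf (bernoulli_pmf (1/2)) \<Otimes>\<^sub>M ngsm_gauss m1 m2 v1 v2 \<rho>) (borel :: ((real^'d)\<times>(real^'d)) measure)"
    using measurable_snd[of "measure_pmf (bernoulli_pmf (1/2))" "ngsm_gauss m1 m2 v1 v2 \<rho>"]
    by (simp add: measurable_cong_sets[OF refl sets_ngsm_gauss])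
  show ?thesis unfolding case_prod_beta' by measurable
qed

lemma prob_space_ngsm_s: "prob_space (ngsm_s m1 m2 v1 v2 \<rho>)"
  unfolding ngsm_s_def
  by (intro prob_space.prob_space_distr prob_space_pair prob_space_ngsm_gauss meas_sign prob_space_measure_pmf)

lemma s_even:
  fixes f :: "(real^'d)\<times>(real^'d) \<Rightarrow> real"
  assumes ev: "\<And>w. f (- w) = f w" and fm: "f \<in> borel_measurable borel"
  shows "(\<integral>w. f w \<partial>ngsm_s m1 m2 v1 v2 \<rho>) = (\<integral>w. f w \<partial>ngsm_gauss m1 m2 v1 v2 \<rho>)"
proof -
  let ?P = "measure_pmf (bernoulli_pmf (1/2)) \<Otimes>\<^sub>M ngsm_gauss m1 m2 v1 v2 \<rho>"
  have "(\<integral>w. f w \<partial>ngsm_s m1 m2 v1 v2 \<rho>) = (\<integral>x. f ((\<lambda>(b, w). if b then w else - w) x) \<partial>?P)"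
    unfolding ngsm_s_def by (rule integral_distr[OF meas_sign fm])
  also have "\<dots> = (\<integral>x. f (snd x) \<partial>?P)"
    by (intro Bochner_Integration.integral_cong refl) (simp add: case_prod_beta' ev)
  also have "\<dots> = (\<integral>w. f w \<partial>distr ?P (ngsm_gauss m1 m2 v1 v2 \<rho>) snd)"
    by (rule integral_distr[symmetric, OF measurable_snd]) (simp add: measurable_cong_sets[OF sets_ngsm_gauss refl] fm)
  also have "\<dots> = (\<integral>w. f w \<partial>ngsm_gauss m1 m2 v1 v2 \<rho>)"
    by (simp add: distr_pair_snd' prob_space_measure_pmf prob_space_ngsm_gauss)
  finally show ?thesis .
qed

lemma sum_split_half: "(\<Sum>j<K+K. (g::nat\<Rightarrow>real) j) = (\<Sum>j<K. g j) + (\<Sum>j<K. g (K + j))"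
proof -
  have "{..<K+K} = {..<K} \<union> {K..<K+K}" by auto
  then have "(\<Sum>j<K+K. g j) = (\<Sum>j<K. g j) + (\<Sum>j\<in>{K..<K+K}. g j)"
    by (simp add: sum.union_disjoint[symmetric] ivl_disj_int)
  also have "(\<Sum>j\<in>{K..<K+K}. g j) = (\<Sum>j<K. g (K + j))"
    using sum.shift_bounds_nat_ivl[of g 0 K K] by (simp add: lessThan_atLeast0 add.commute)
  finally show ?thesis .
qed

lemma cos_meas: "(\<lambda>w::(real^'d)\<times>(real^'d). cos (fst w \<bullet> y1 - snd w \<bullet> y2)) \<in> borel_measurable borel"
  by (intro borel_measurable_continuous_onI continuous_intros)

lemma cos_even: "cos (fst (- w) \<bullet> y1 - snd (- w) \<bullet> y2) = cos (fst w \<bullet> y1 - snd w \<bullet> y2)"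
proof -
  have "fst (- w) \<bullet> y1 - snd (- w) \<bullet> y2 = - (fst w \<bullet> y1 - snd w \<bullet> y2)" by (cases w) simp
  then show ?thesis by (simp only: cos_minus)
qed

lemma s_cos:
  fixes m1 m2 v1 v2 y1 y2 :: "real^'d" and \<rho> :: real
  assumes v1: "\<And>i. v1 $ i > 0" and v2: "\<And>i. v2 $ i > 0" and r: "\<rho> \<in> {-1..1}"
  shows "(\<integral>w. cos (fst w \<bullet> y1 - snd w \<bullet> y2) \<partial>ngsm_s m1 m2 v1 v2 \<rho>) =
    exp (- (1/2) * (diag_form v1 y1 y1 - 2 * diag_form (\<chi> i. \<rho> * (sdev v1 $ i * sdev v2 $ i)) y1 y2
       + diag_form v2 y2 y2)) * cos (m1 \<bullet> y1 - m2 \<bullet> y2)"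
  by (subst s_even[OF cos_even cos_meas]) (rule gauss_cos[OF v1 v2 r])

lemma sets_ngsm_s: "sets (ngsm_s m1 m2 v1 v2 \<rho>) = sets borel"
  by (simp add: ngsm_s_def)

lemma integrable_s_cos:
  "integrable (ngsm_s m1 m2 v1 v2 \<rho>) (\<lambda>w::(real^'d)\<times>(real^'d). cos (fst w \<bullet> y1 - snd w \<bullet> y2))"
proof -
  interpret prob_space "ngsm_s m1 m2 v1 v2 \<rho> :: ((real^'d)\<times>(real^'d)) measure" by (rule prob_space_ngsm_s)
  show ?thesis
    by (rule integrable_const_bound[where B=1])
       (simp_all add: measurable_cong_sets[OF sets_ngsm_s refl] cos_meas)
qed

definition hfun :: "real^'d \<Rightarrow> real^'d \<Rightarrow> (real^'d) \<times> (real^'d) \<Rightarrow> real" where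
  "hfun x1 x2 w = cos (fst w \<bullet> x1 - snd w \<bullet> x2) + cos (fst w \<bullet> x2 - snd w \<bullet> x1)
     + cos (fst w \<bullet> (x1 - x2) - snd w \<bullet> 0) + cos (fst w \<bullet> 0 - snd w \<bullet> (x2 - x1))"

lemma abs4: "\<bar>a\<bar> \<le> 1 \<Longrightarrow> \<bar>b\<bar> \<le> 1 \<Longrightarrow> \<bar>c\<bar> \<le> 1 \<Longrightarrow> \<bar>d\<bar> \<le> 1 \<Longrightarrow> \<bar>a + b + c + d\<bar> \<le> (4::real)"
  by (simp add: abs_le_iff)

lemma hfun_bound: "\<bar>hfun x1 x2 w\<bar> \<le> 4"
  unfolding hfun_def by (intro abs4 abs_cos_le_one)

lemma hfun_meas: "hfun x1 x2 \<in> borel_measurable borel"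
  unfolding hfun_def by (intro borel_measurable_continuous_onI continuous_intros)

lemma diag_form_sym: "diag_form v a b = diag_form v b a"
  by (simp add: diag_form_def mult.commute mult.left_commute)

lemma diag_form_swap: "diag_form v (a - b) (a - b) = diag_form v (b - a) (b - a)"
  unfolding diag_form_def by (intro sum.cong refl) (simp add: algebra_simps)

lemma diag_form_0: "diag_form v a 0 = 0" "diag_form v 0 a = 0"
  by (simp_all add: diag_form_def)

lemma trig_aux: "(cos (a1::real) + cos a2) * (cos b1 + cos b2) + (sin a1 + sin a2) * (sin b1 + sin b2)
   = cos (a1 - b2) + cos (b1 - a2) + cos (a1 - b1 - 0) + cos (0 - (b2 - a2))"
  by (simp only: cos_diff) (simp add: algebra_simps)

lemma cos_swap: "cos (m \<bullet> (b - a)) = cos (m \<bullet> (a - b))"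
proof -
  have "m \<bullet> (b - a) = - (m \<bullet> (a - b))" by (simp add: inner_diff_right)
  then show ?thesis by (simp only: cos_minus)
qed

theorem theorem3:
  fixes Q L :: nat
    and alpha :: "nat \<Rightarrow> real"
    and mu1 mu2 v1 v2 :: "nat \<Rightarrow> real ^ 'd"
    and rho :: "nat \<Rightarrow> real"
    and x1 x2 :: "real ^ 'd"
  assumes "Q \<ge> 1"
    and "even L" and "L > 0"
    and "\<And>q. q < Q \<Longrightarrow> alpha q \<ge> 0"
    and "\<And>q i. q < Q \<Longrightarrow> v1 q $ i > 0"
    and "\<And>q i. q < Q \<Longrightarrow> v2 q $ i > 0"
    and "\<And>q. q < Q \<Longrightarrow> rho q \<in> {-1..1}"
  shows "(\<integral>W. ngsm_inner Q L alpha W x1 x2 \<partial>ngsm_joint Q L mu1 mu2 v1 v2 rho)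
           = k_ngsm Q alpha mu1 mu2 v1 v2 rho x1 x2"
proof -
  from \<open>even L\<close> obtain K where LK: "L = K + K" by (metis evenE mult_2)
  have Kpos: "K > 0" using \<open>L > 0\<close> LK by simp
  have Kdiv: "L div 2 = K" using LK by simp
  define I where "I = {..<Q} \<times> {..<K}"
  define M where "M = (\<lambda>(q::nat, l::nat). ngsm_s (mu1 q) (mu2 q) (v1 q) (v2 q) (rho q))"
  define E where "E = (\<lambda>q. let S1 = v1 q; S2 = v2 q; Sc = (\<chi> i. rho q * (sdev (v1 q) $ i * sdev (v2 q) $ i)) in
       exp (- (1/2) * (diag_form S1 x1 x1 - 2 * diag_form Sc x1 x2 + diag_form S2 x2 x2))
         * cos (mu1 q \<bullet> x1 - mu2 q \<bullet> x2)
     + exp (- (1/2) * (diag_form S1 x2 x2 - 2 * diag_form Sc x1 x2 + diag_form S2 x1 x1))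
         * cos (mu1 q \<bullet> x2 - mu2 q \<bullet> x1)
     + exp (- (1/2) * diag_form S1 (x1 - x2) (x1 - x2)) * cos (mu1 q \<bullet> (x1 - x2))
     + exp (- (1/2) * diag_form S2 (x1 - x2) (x1 - x2)) * cos (mu2 q \<bullet> (x1 - x2)))"
  have kE: "k_ngsm Q alpha mu1 mu2 v1 v2 rho x1 x2 = (1/4) * (\<Sum>q<Q. alpha q * E q)"
    unfolding k_ngsm_def E_def ..
  have J: "ngsm_joint Q L mu1 mu2 v1 v2 rho = PiM I M"
    by (simp add: ngsm_joint_def I_def M_def Kdiv)
  have pt: "ngsm_inner Q L alpha W x1 x2 = (\<Sum>q<Q. \<Sum>l<K. (alpha q / (2 * real L)) * hfun x1 x2 (W (q, l)))" for W
    unfolding ngsm_inner_def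
  proof (rule sum.cong[OF refl])
    fix q assume q: "q \<in> {..<Q}"
    have a: "alpha q \<ge> 0" using assms(4) q by simp
    define c where "c = sqrt (alpha q) * sqrt (1 / (2 * real L))"
    have cc: "c * c = alpha q / (2 * real L)"
      using a by (simp add: c_def real_sqrt_mult[symmetric])
    have "(\<Sum>j<L. ngsm_feat L alpha W q x1 j * ngsm_feat L alpha W q x2 j) =
      (\<Sum>l<K. ngsm_feat L alpha W q x1 l * ngsm_feat L alpha W q x2 l
         + ngsm_feat L alpha W q x1 (K + l) * ngsm_feat L alpha W q x2 (K + l))"
      by (simp add: LK sum_split_half sum.distrib)
    also have "\<dots> = (\<Sum>l<K. (alpha q / (2 * real L)) * hfun x1 x2 (W (q, l)))"
    proof (rule sum.cong[OF refl])
      fix l assume l: "l \<in> {..<K}"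
      have e1: "ngsm_feat L alpha W q x l = c * (cos (fst (W (q, l)) \<bullet> x) + cos (snd (W (q, l)) \<bullet> x))" for x
        using l by (simp add: ngsm_feat_def Kdiv c_def)
      have e2: "ngsm_feat L alpha W q x (K + l) = c * (sin (fst (W (q, l)) \<bullet> x) + sin (snd (W (q, l)) \<bullet> x))" for x
        by (simp add: ngsm_feat_def Kdiv c_def)
      have h: "hfun x1 x2 w = (cos (fst w \<bullet> x1) + cos (snd w \<bullet> x1)) * (cos (fst w \<bullet> x2) + cos (snd w \<bullet> x2))
          + (sin (fst w \<bullet> x1) + sin (snd w \<bullet> x1)) * (sin (fst w \<bullet> x2) + sin (snd w \<bullet> x2))" for w
        unfolding hfun_def trig_aux by (simp only: inner_diff_right inner_zero_right)
      have "ngsm_feat L alpha W q x1 l * ngsm_feat L alpha W q x2 l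
         + ngsm_feat L alpha W q x1 (K + l) * ngsm_feat L alpha W q x2 (K + l)
         = (c * c) * ((cos (fst (W (q, l)) \<bullet> x1) + cos (snd (W (q, l)) \<bullet> x1)) * (cos (fst (W (q, l)) \<bullet> x2) + cos (snd (W (q, l)) \<bullet> x2))
          + (sin (fst (W (q, l)) \<bullet> x1) + sin (snd (W (q, l)) \<bullet> x1)) * (sin (fst (W (q, l)) \<bullet> x2) + sin (snd (W (q, l)) \<bullet> x2)))"
        by (simp only: e1 e2) (simp add: algebra_simps)
      then show "ngsm_feat L alpha W q x1 l * ngsm_feat L alpha W q x2 l
         + ngsm_feat L alpha W q x1 (K + l) * ngsm_feat L alpha W q x2 (K + l)
         = (alpha q / (2 * real L)) * hfun x1 x2 (W (q, l))"
        by (simp only: cc h)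
    qed
    finally show "(\<Sum>j<L. ngsm_feat L alpha W q x1 j * ngsm_feat L alpha W q x2 j) =
      (\<Sum>l<K. (alpha q / (2 * real L)) * hfun x1 x2 (W (q, l)))" .
  qed
  have probM: "prob_space (M i)" for i by (simp add: M_def case_prod_beta prob_space_ngsm_s)
  interpret P: prob_space "PiM I M" by (rule prob_space_PiM) (simp add: probM)
  have setsM: "sets (M i) = sets borel" for i by (simp add: M_def case_prod_beta sets_ngsm_s)
  have hmeasM: "hfun x1 x2 \<in> borel_measurable (M i)" for i
    using hfun_meas by (simp add: measurable_cong_sets[OF setsM refl])
  have measW: "(\<lambda>W. hfun x1 x2 (W i)) \<in> borel_measurable (PiM I M)" if i: "i \<in> I" for i
    by (rule measurable_compose[OF measurable_component_singleton[OF i] hmeasM])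
  have intW: "integrable (PiM I M) (\<lambda>W. hfun x1 x2 (W i))" if i: "i \<in> I" for i
    by (rule P.integrable_const_bound[where B=4]) (simp_all add: hfun_bound measW[OF i])
  have comp: "(\<integral>W. hfun x1 x2 (W i) \<partial>PiM I M) = (\<integral>w. hfun x1 x2 w \<partial>M i)" if i: "i \<in> I" for i
  proof -
    have D: "distr (PiM I M) (M i) (\<lambda>\<omega>. \<omega> i) = M i"
      by (rule distr_PiM_component) (simp_all add: probM i)
    have "(\<integral>W. hfun x1 x2 (W i) \<partial>PiM I M) = (\<integral>w. hfun x1 x2 w \<partial>distr (PiM I M) (M i) (\<lambda>\<omega>. \<omega> i))"
      by (rule integral_distr[symmetric]) (simp_all add: i measurable_component_singleton hmeasM)
    then show ?thesis using D by simp
  qed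
  have hint: "(\<integral>w. hfun x1 x2 w \<partial>ngsm_s (mu1 q) (mu2 q) (v1 q) (v2 q) (rho q)) = E q" if q: "q < Q" for q
  proof -
    let ?N = "ngsm_s (mu1 q) (mu2 q) (v1 q) (v2 q) (rho q)"
    let ?Sc = "\<chi> i. rho q * (sdev (v1 q) $ i * sdev (v2 q) $ i)"
    have v1q: "\<And>i. v1 q $ i > 0" and v2q: "\<And>i. v2 q $ i > 0" and rq: "rho q \<in> {-1..1}"
      using assms(5,6,7) q by auto
    note sc = s_cos[OF v1q v2q rq]
    have "(\<integral>w. hfun x1 x2 w \<partial>?N) = (\<integral>w. cos (fst w \<bullet> x1 - snd w \<bullet> x2) \<partial>?N) + (\<integral>w. cos (fst w \<bullet> x2 - snd w \<bullet> x1) \<partial>?N)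
       + (\<integral>w. cos (fst w \<bullet> (x1 - x2) - snd w \<bullet> 0) \<partial>?N) + (\<integral>w. cos (fst w \<bullet> 0 - snd w \<bullet> (x2 - x1)) \<partial>?N)"
      unfolding hfun_def
      by (simp only: Bochner_Integration.integral_add Bochner_Integration.integrable_add integrable_s_cos)
    also have "\<dots> = exp (- (1/2) * (diag_form (v1 q) x1 x1 - 2 * diag_form ?Sc x1 x2 + diag_form (v2 q) x2 x2))
         * cos (mu1 q \<bullet> x1 - mu2 q \<bullet> x2)
     + exp (- (1/2) * (diag_form (v1 q) x2 x2 - 2 * diag_form ?Sc x2 x1 + diag_form (v2 q) x1 x1))
         * cos (mu1 q \<bullet> x2 - mu2 q \<bullet> x1)
     + exp (- (1/2) * (diag_form (v1 q) (x1 - x2) (x1 - x2) - 2 * diag_form ?Sc (x1 - x2) 0 + diag_form (v2 q) 0 0))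
         * cos (mu1 q \<bullet> (x1 - x2) - mu2 q \<bullet> 0)
     + exp (- (1/2) * (diag_form (v1 q) 0 0 - 2 * diag_form ?Sc 0 (x2 - x1) + diag_form (v2 q) (x2 - x1) (x2 - x1)))
         * cos (mu1 q \<bullet> 0 - mu2 q \<bullet> (x2 - x1))"
      by (simp only: sc)
    also have "\<dots> = E q"
      unfolding E_def Let_def
      by (simp add: diag_form_0 diag_form_sym[of ?Sc x2 x1] diag_form_swap[of "v2 q" x2 x1] cos_swap[of "mu2 q" x2 x1])
    finally show ?thesis .
  qed
  have "(\<integral>W. ngsm_inner Q L alpha W x1 x2 \<partial>ngsm_joint Q L mu1 mu2 v1 v2 rho)
      = (\<integral>W. (\<Sum>q<Q. \<Sum>l<K. (alpha q / (2 * real L)) * hfun x1 x2 (W (q, l))) \<partial>PiM I M)"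
    by (simp only: J pt)
  also have "\<dots> = (\<Sum>q<Q. (\<integral>W. (\<Sum>l<K. (alpha q / (2 * real L)) * hfun x1 x2 (W (q, l))) \<partial>PiM I M))"
    by (rule Bochner_Integration.integral_sum, rule Bochner_Integration.integrable_sum, rule integrable_mult_right)
       (rule intW, simp add: I_def)
  also have "\<dots> = (\<Sum>q<Q. \<Sum>l<K. (\<integral>W. (alpha q / (2 * real L)) * hfun x1 x2 (W (q, l)) \<partial>PiM I M))"
    by (intro sum.cong refl, rule Bochner_Integration.integral_sum, rule integrable_mult_right)
       (rule intW, simp add: I_def)
  also have "\<dots> = (\<Sum>q<Q. \<Sum>l<K. (alpha q / (2 * real L)) * (\<integral>W. hfun x1 x2 (W (q, l)) \<partial>PiM I M))"
    by (simp only: integral_mult_right_zero)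
  also have "\<dots> = (\<Sum>q<Q. \<Sum>l<K. (alpha q / (2 * real L)) * E q)"
  proof (intro sum.cong refl)
    fix q l assume q: "q \<in> {..<Q}" and l: "l \<in> {..<K}"
    have "(\<integral>W. hfun x1 x2 (W (q, l)) \<partial>PiM I M) = (\<integral>w. hfun x1 x2 w \<partial>M (q, l))"
      by (rule comp) (use q l in \<open>simp add: I_def\<close>)
    also have "\<dots> = E q" using q by (simp add: M_def hint)
    finally show "(alpha q / (2 * real L)) * (\<integral>W. hfun x1 x2 (W (q, l)) \<partial>PiM I M) = (alpha q / (2 * real L)) * E q"
      by simp
  qed
  also have "\<dots> = (1/4) * (\<Sum>q<Q. alpha q * E q)"
    using Kpos by (simp add: LK sum_distrib_left field_simps)
  finally show ?thesis by (simp only: kE)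
qed

end
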